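(* Let $(X,G)$ be a minimal topological dynamical system. Then: (1) If $\pi_{eq}$ is open, then $\mathcal X_{eq}^{\mathrm{meas}}=\{\pi_{eq}^{-1}(y):y\in X_{eq}\}$. (2) If $\pi_{eq}$ is regular one to one, then $|E|=1$ for every $E\in\mathcal X_{eq}^{\mathrm{meas}}$. (3) If $\pi_{eq}$ is regular $K$ to one, then $|E|\le K$ for every $E\in\mathcal X_{eq}^{\mathrm{meas}}$.
   Context: $G$ is an infinite countable discrete group; a tds $(X,G)$ is a compact metric space with a $G$-action by homeomorphisms; minimal means no proper nonempty closed invariant subset. $\pi_{eq}:X\to X_{eq}$ is the factor map onto the maximal equicontinuous factor, $\nu_{eq}$ the unique invariant probability measure of $(X_{eq},G)$; $\pi_{eq}$ is regular $K$ to one if $\nu_{eq}(\{y:|\pi_{eq}^{-1}(y)|=K\})=1$. $2^X$ is the space of nonempty closed subsets with the Hausdorff metric $d_H$. $\mathcal X=\overline{\{\pi_{eq}^{-1}(y):y\in X_{eq}\}}\subset 2^X$; for $E\in\mathcal X$, $\pi_{\mathcal X}(E)$ is the single point $\pi_{eq}(E)$. $\mathcal X_{eq}^{\mathrm{meas}}=\{E\in\mathcal X:\nu_{eq}(\pi_{\mathcal X}(B^{\mathcal X}_\epsilon(E)))>0\ \forall\epsilon>0\}$, $B^{\mathcal X}_\epsilon(E)$ the open $d_H$-ball in $\mathcal X$. *)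

theory Defs
  imports "HOL-Probability.Probability"
begin

definition tds :: "('g::group_add \<Rightarrow> 'a::metric_space \<Rightarrow> 'a) \<Rightarrow> 'a set \<Rightarrow> bool" where
  "tds T X \<longleftrightarrow> compact X \<and> X \<noteq> {} \<and>
     (\<forall>g. continuous_on X (T g) \<and> T g ` X \<subseteq> X) \<and>
     (\<forall>x\<in>X. T 0 x = x) \<and>
     (\<forall>g h. \<forall>x\<in>X. T (g + h) x = T g (T h x))"

definition minimal_tds :: "('g::group_add \<Rightarrow> 'a::metric_space \<Rightarrow> 'a) \<Rightarrow> 'a set \<Rightarrow> bool" where
  "minimal_tds T X \<longleftrightarrow> tds T X \<and>
     (\<forall>A. A \<subseteq> X \<and> closed A \<and> A \<noteq> {} \<and> (\<forall>g. T g ` A \<subseteq> A) \<longrightarrow> A = X)"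

definition equicontinuous_tds :: "('g \<Rightarrow> 'a::metric_space \<Rightarrow> 'a) \<Rightarrow> 'a set \<Rightarrow> bool" where
  "equicontinuous_tds T X \<longleftrightarrow>
     (\<forall>e>0. \<exists>d>0. \<forall>x\<in>X. \<forall>y\<in>X. dist x y < d \<longrightarrow> (\<forall>g. dist (T g x) (T g y) < e))"

definition factor_map ::
  "('g \<Rightarrow> 'a \<Rightarrow> 'a) \<Rightarrow> ('a::metric_space) set \<Rightarrow> ('g \<Rightarrow> 'b \<Rightarrow> 'b) \<Rightarrow> ('b::metric_space) set
     \<Rightarrow> ('a \<Rightarrow> 'b) \<Rightarrow> bool" where
  "factor_map T X S Y p \<longleftrightarrow> continuous_on X p \<and> p ` X = Y \<and>
     (\<forall>g. \<forall>x\<in>X. p (T g x) = S g (p x))"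

text \<open>Test factors are taken with phase space inside the
metric space nat => real (product topology), into which every compact
metric space embeds (Hilbert cube), so this is the usual universal property.\<close>
definition max_equicontinuous_factor ::
  "('g::group_add \<Rightarrow> 'a \<Rightarrow> 'a) \<Rightarrow> ('a::metric_space) set \<Rightarrow> ('g \<Rightarrow> 'b \<Rightarrow> 'b) \<Rightarrow> ('b::metric_space) set
     \<Rightarrow> ('a \<Rightarrow> 'b) \<Rightarrow> bool" where
  "max_equicontinuous_factor T X S Y p \<longleftrightarrow>
     tds S Y \<and> equicontinuous_tds S Y \<and> factor_map T X S Y p \<and>
     (\<forall>(R :: 'g \<Rightarrow> (nat \<Rightarrow> real) \<Rightarrow> (nat \<Rightarrow> real)) Z q.
        tds R Z \<and> equicontinuous_tds R Z \<and> factor_map T X R Z q \<longrightarrow>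
        (\<exists>f. continuous_on Y f \<and> (\<forall>x\<in>X. q x = f (p x))))"

definition invariant_prob :: "('g \<Rightarrow> 'b \<Rightarrow> 'b) \<Rightarrow> ('b::metric_space) set \<Rightarrow> 'b measure \<Rightarrow> bool" where
  "invariant_prob S Y \<mu> \<longleftrightarrow> prob_space \<mu> \<and> sets \<mu> = sets (restrict_space borel Y) \<and>
     (\<forall>g. \<forall>A\<in>sets \<mu>. measure \<mu> (S g -` A \<inter> Y) = measure \<mu> A)"

definition fiber :: "('a \<Rightarrow> 'b) \<Rightarrow> 'a set \<Rightarrow> 'b \<Rightarrow> 'a set" where
  "fiber p X y = {x\<in>X. p x = y}"

definition hausdist :: "'a::metric_space set \<Rightarrow> 'a set \<Rightarrow> real" where
  "hausdist A B = max (SUP x\<in>A. infdist x B) (SUP y\<in>B. infdist y A)"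

text \<open>The closure, in the hyperspace of nonempty closed subsets of X with the
Hausdorff metric, of the set of fibres of p.\<close>
definition fiber_hull :: "('a::metric_space \<Rightarrow> 'b) \<Rightarrow> 'a set \<Rightarrow> 'b set \<Rightarrow> 'a set set" where
  "fiber_hull p X Y = {E. E \<subseteq> X \<and> closed E \<and> E \<noteq> {} \<and>
      (\<forall>e>0. \<exists>y\<in>Y. hausdist E (fiber p X y) < e)}"

definition piX :: "('a \<Rightarrow> 'b) \<Rightarrow> 'a set \<Rightarrow> 'b" where
  "piX p E = the_elem (p ` E)"

definition meas_part :: "('a::metric_space \<Rightarrow> 'b) \<Rightarrow> 'a set \<Rightarrow> 'b set \<Rightarrow> 'b measure \<Rightarrow> 'a set set" where
  "meas_part p X Y \<nu> = {E\<in>fiber_hull p X Y. \<forall>e>0.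
      measure \<nu> (piX p ` {F\<in>fiber_hull p X Y. hausdist E F < e}) > 0}"

end

theory Submission
  imports Defs
begin

lemma infdist_lessE:
  assumes "B \<noteq> {}" "infdist x B < e"
  obtains b where "b \<in> B" "dist x b < e"
  using assms by (auto simp: infdist_notempty cINF_less_iff)

lemma bdd_infdist:
  assumes "bounded A" "B \<noteq> {}"
  shows "bdd_above ((\<lambda>x. infdist x B) ` A)"
proof -
  obtain b where b: "b \<in> B" using assms by auto
  obtain c r where cr: "\<forall>x\<in>A. dist c x \<le> r" using assms(1) unfolding bounded_def by blast
  have "infdist x B \<le> r + dist c b" if "x \<in> A" for x
  proof -
    have "infdist x B \<le> dist x b" using b by (rule infdist_le)
    also have "\<dots> \<le> dist x c + dist c b" by (rule dist_triangle)
    also have "\<dots> \<le> r + dist c b" using cr that by (metis add_right_mono dist_commute)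
    finally show ?thesis .
  qed
  then show ?thesis by (rule bdd_aboveI2)
qed

lemma hausdist_leD:
  assumes "bounded A" "bounded B" "A \<noteq> {}" "B \<noteq> {}" "hausdist A B \<le> r"
  shows "\<forall>x\<in>A. infdist x B \<le> r" "\<forall>y\<in>B. infdist y A \<le> r"
proof -
  show "\<forall>x\<in>A. infdist x B \<le> r"
  proof
    fix x assume "x \<in> A"
    then have "infdist x B \<le> (SUP x\<in>A. infdist x B)"
      by (intro cSUP_upper bdd_infdist assms)
    then show "infdist x B \<le> r" using assms(5) unfolding hausdist_def by linarith
  qed
  show "\<forall>x\<in>B. infdist x A \<le> r"
  proof
    fix x assume "x \<in> B"
    then have "infdist x A \<le> (SUP x\<in>B. infdist x A)"
      by (intro cSUP_upper bdd_infdist assms)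
    then show "infdist x A \<le> r" using assms(5) unfolding hausdist_def by linarith
  qed
qed

lemma hausdist_lessD:
  assumes "bounded A" "bounded B" "A \<noteq> {}" "B \<noteq> {}" "hausdist A B < r"
  shows "\<forall>x\<in>A. infdist x B < r" "\<forall>y\<in>B. infdist y A < r"
  using hausdist_leD[OF assms(1-4) order_refl] assms(5) by force+

lemma hausdist_leI:
  assumes "A \<noteq> {}" "B \<noteq> {}" "\<forall>x\<in>A. infdist x B \<le> r" "\<forall>y\<in>B. infdist y A \<le> r"
  shows "hausdist A B \<le> r"
  unfolding hausdist_def using assms by (auto intro!: cSUP_least)

lemma hausdist_self:
  assumes "A \<noteq> {}" shows "hausdist A A = 0"
  unfolding hausdist_def using assms by simp

lemma infdist_trans:
  assumes "B \<noteq> {}" "\<forall>b\<in>B. infdist b C \<le> d"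
  shows "infdist x C \<le> infdist x B + d"
proof -
  have "infdist x C - d \<le> infdist x B"
    unfolding infdist_notempty[OF assms(1)]
  proof (rule cINF_greatest[OF assms(1)])
    fix b assume "b \<in> B"
    have "infdist x C \<le> infdist b C + dist x b" by (rule infdist_triangle)
    then show "infdist x C - d \<le> dist x b" using assms(2) \<open>b \<in> B\<close> by force
  qed
  then show ?thesis by simp
qed

lemma fiber_closed:
  fixes p :: "'a::metric_space \<Rightarrow> 'b::metric_space"
  assumes "compact X" "continuous_on X p" shows "closed (fiber p X y)"
  unfolding fiber_def using assms by (intro continuous_closed_preimage_constant compact_imp_closed)

lemma fiber_bounded:
  assumes "compact X" shows "bounded (fiber p X y)"
proof -
  have "fiber p X y \<subseteq> X" by (auto simp: fiber_def)
  then show ?thesis by (rule bounded_subset[OF compact_imp_bounded[OF assms]])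
qed

lemma fiber_ne:
  assumes "p ` X = Y" "y \<in> Y" shows "fiber p X y \<noteq> {}"
  using assms unfolding fiber_def by auto

lemma fiber_in_hull:
  fixes p :: "'a::metric_space \<Rightarrow> 'b::metric_space"
  assumes "compact X" "continuous_on X p" "p ` X = Y" "y \<in> Y"
  shows "fiber p X y \<in> fiber_hull p X Y"
proof -
  have "fiber p X y \<subseteq> X" by (auto simp: fiber_def)
  moreover have "\<forall>e>0. \<exists>y'\<in>Y. hausdist (fiber p X y) (fiber p X y') < e"
    using hausdist_self[OF fiber_ne[OF assms(3,4)]] assms(4) by (metis bexI)
  ultimately show ?thesis unfolding fiber_hull_def
    using fiber_closed[OF assms(1,2)] fiber_ne[OF assms(3,4)] by blast
qed

lemma piX_fiber:
  assumes "p ` X = Y" "y \<in> Y" shows "piX p (fiber p X y) = y"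
proof -
  have "p ` fiber p X y = {y}" using assms by (auto simp: fiber_def)
  then show ?thesis by (simp add: piX_def)
qed

lemma hull_const:
  fixes p :: "'a::metric_space \<Rightarrow> 'b::metric_space"
  assumes cX: "compact X" and cp: "continuous_on X p" and pY: "p ` X = Y"
    and F: "F \<in> fiber_hull p X Y" and x: "x \<in> F" and x': "x' \<in> F"
  shows "p x = p x'"
proof -
  have uc: "uniformly_continuous_on X p" using cX cp compact_uniformly_continuous by blast
  have FX: "F \<subseteq> X" "F \<noteq> {}" using F by (auto simp: fiber_hull_def)
  have bF: "bounded F" by (rule bounded_subset[OF compact_imp_bounded[OF cX] FX(1)])
  have "dist (p x) (p x') < 2 * \<eta>" if "\<eta> > 0" for \<eta>
  proof -
    obtain \<delta> where d: "\<delta> > 0" "\<forall>a\<in>X. \<forall>b\<in>X. dist b a < \<delta> \<longrightarrow> dist (p b) (p a) < \<eta>"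
      using uc \<open>\<eta> > 0\<close> unfolding uniformly_continuous_on_def by blast
    obtain y where y: "y \<in> Y" "hausdist F (fiber p X y) < \<delta>"
      using F d(1) unfolding fiber_hull_def by blast
    have h: "\<forall>a\<in>F. infdist a (fiber p X y) < \<delta>"
      using hausdist_lessD(1)[OF bF fiber_bounded[OF cX] FX(2) fiber_ne[OF pY y(1)] y(2)] .
    obtain z where z: "z \<in> fiber p X y" "dist x z < \<delta>"
      using h x fiber_ne[OF pY y(1)] infdist_lessE by metis
    obtain z' where z': "z' \<in> fiber p X y" "dist x' z' < \<delta>"
      using h x' fiber_ne[OF pY y(1)] infdist_lessE by metis
    have "dist (p x) y < \<eta>" using d(2) z x FX(1) by (auto simp: fiber_def)
    moreover have "dist (p x') y < \<eta>" using d(2) z' x' FX(1) by (auto simp: fiber_def)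
    ultimately show ?thesis by (smt (verit) dist_commute dist_triangle)
  qed
  show ?thesis
  proof (rule ccontr)
    assume "p x \<noteq> p x'"
    then have "dist (p x) (p x') > 0" by simp
    from this[THEN half_gt_zero, THEN \<open>\<And>\<eta>. \<eta> > 0 \<Longrightarrow> _\<close>] show False by simp
  qed
qed

lemma hull_piX:
  fixes p :: "'a::metric_space \<Rightarrow> 'b::metric_space"
  assumes cX: "compact X" and cp: "continuous_on X p" and pY: "p ` X = Y"
    and F: "F \<in> fiber_hull p X Y" and x: "x \<in> F"
  shows "piX p F = p x" "piX p F \<in> Y" "F \<subseteq> fiber p X (piX p F)"
proof -
  have FX: "F \<subseteq> X" using F by (auto simp: fiber_hull_def)
  have c: "\<forall>z\<in>F. p z = p x" using hull_const[OF cX cp pY F _ x] by blast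
  have "p ` F = {p x}"
  proof
    show "p ` F \<subseteq> {p x}" using c by blast
    show "{p x} \<subseteq> p ` F" using x by blast
  qed
  then show 1: "piX p F = p x" by (simp add: piX_def)
  show "piX p F \<in> Y" using 1 x FX pY by blast
  show "F \<subseteq> fiber p X (piX p F)" unfolding fiber_def 1 using c FX by blast
qed

lemma open_map_ball:
  fixes p :: "'a::metric_space \<Rightarrow> 'b::metric_space"
  assumes om: "open_map (top_of_set X) (top_of_set Y) p" and x: "x \<in> X" and r: "r > 0"
  obtains Ub where "open Ub" "p x \<in> Ub" "\<forall>y'\<in>Ub \<inter> Y. \<exists>z\<in>X. dist x z < r \<and> p z = y'"
proof -
  have "openin (top_of_set X) (X \<inter> ball x r)" by (simp add: openin_open_Int)
  then have "openin (top_of_set Y) (p ` (X \<inter> ball x r))" using om unfolding open_map_def by blast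
  then obtain Ub where Ub: "open Ub" "p ` (X \<inter> ball x r) = Y \<inter> Ub" unfolding openin_open by blast
  have "p x \<in> Ub" using Ub(2) x r by auto
  moreover have "\<forall>y'\<in>Ub \<inter> Y. \<exists>z\<in>X. dist x z < r \<and> p z = y'"
  proof
    fix y' assume "y' \<in> Ub \<inter> Y"
    then have "y' \<in> p ` (X \<inter> ball x r)" using Ub(2) by blast
    then show "\<exists>z\<in>X. dist x z < r \<and> p z = y'" by auto
  qed
  ultimately show ?thesis using that Ub(1) by blast
qed

lemma hull_open_fiber:
  fixes p :: "'a::metric_space \<Rightarrow> 'b::metric_space"
  assumes cX: "compact X" and cp: "continuous_on X p" and pY: "p ` X = Y"
    and om: "open_map (top_of_set X) (top_of_set Y) p"
    and F: "F \<in> fiber_hull p X Y"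
  shows "F = fiber p X (piX p F)"
proof -
  have FX: "F \<subseteq> X" "F \<noteq> {}" "closed F" using F by (auto simp: fiber_hull_def)
  have bF: "bounded F" by (rule bounded_subset[OF compact_imp_bounded[OF cX] FX(1)])
  obtain f0 where f0: "f0 \<in> F" using FX by auto
  define y0 where "y0 = piX p F"
  have y0: "y0 = p f0" using hull_piX(1)[OF cX cp pY F f0] y0_def by simp
  have uc: "uniformly_continuous_on X p" using cX cp compact_uniformly_continuous by blast
  have "fiber p X y0 \<subseteq> F"
  proof
    fix x assume x: "x \<in> fiber p X y0"
    have xX: "x \<in> X" "p x = y0" using x by (auto simp: fiber_def)
    have "infdist x F < 2 * \<eta>" if "\<eta> > 0" for \<eta>
    proof -
      obtain Ub where Ub: "open Ub" "y0 \<in> Ub" "\<forall>y'\<in>Ub \<inter> Y. \<exists>z\<in>X. dist x z < \<eta> \<and> p z = y'"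
        using open_map_ball[OF om xX(1) \<open>\<eta> > 0\<close>] xX(2) by metis
      obtain \<rho> where \<rho>: "\<rho> > 0" "ball y0 \<rho> \<subseteq> Ub" using Ub(1,2) open_contains_ball by blast
      obtain \<delta> where d: "\<delta> > 0" "\<forall>a\<in>X. \<forall>b\<in>X. dist b a < \<delta> \<longrightarrow> dist (p b) (p a) < \<rho>"
        using uc \<rho>(1) unfolding uniformly_continuous_on_def by blast
      have mp: "min \<delta> \<eta> > 0" using d(1) \<open>\<eta> > 0\<close> by simp
      obtain y where y: "y \<in> Y" "hausdist F (fiber p X y) < min \<delta> \<eta>"
        using F mp unfolding fiber_hull_def by blast
      note hd = hausdist_lessD[OF bF fiber_bounded[OF cX] FX(2) fiber_ne[OF pY y(1)] y(2)]
      obtain z where z: "z \<in> fiber p X y" "dist f0 z < min \<delta> \<eta>"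
        using hd(1) f0 fiber_ne[OF pY y(1)] infdist_lessE by metis
      have zX: "z \<in> X" "p z = y" using z(1) unfolding fiber_def by blast+
      have "dist f0 z < \<delta>" using z(2) by simp
      then have "dist (p f0) (p z) < \<rho>" using d(2) zX(1) f0 FX(1) by blast
      then have "y \<in> ball y0 \<rho>" using zX(2) y0 by (simp add: mem_ball)
      then have "y \<in> Ub" using \<rho>(2) by blast
      then obtain w where w: "w \<in> X" "dist x w < \<eta>" "p w = y" using Ub(3) y(1) by blast
      have "w \<in> fiber p X y" using w by (simp add: fiber_def)
      then have "infdist w F < \<eta>" using hd(2) by force
      moreover have "infdist x F \<le> infdist w F + dist x w" by (rule infdist_triangle)
      ultimately show ?thesis using w(2) by linarith
    qed
    have "infdist x F = 0"
    proof (rule ccontr)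
      assume "infdist x F \<noteq> 0"
      then have "infdist x F > 0" using infdist_nonneg[of x F] by linarith
      from this[THEN half_gt_zero, THEN \<open>\<And>\<eta>. \<eta> > 0 \<Longrightarrow> _\<close>] show False by simp
    qed
    then show "x \<in> F" using in_closed_iff_infdist_zero[OF FX(3,2)] by blast
  qed
  then show ?thesis using hull_piX(3)[OF cX cp pY F f0] y0_def by blast
qed

lemma fiber_cont:
  fixes p :: "'a::metric_space \<Rightarrow> 'b::metric_space"
  assumes cX: "compact X" and cp: "continuous_on X p" and pY: "p ` X = Y"
    and om: "open_map (top_of_set X) (top_of_set Y) p"
    and y: "y \<in> Y" and d: "d > 0"
  obtains V where "open V" "y \<in> V"
    "\<forall>y'\<in>V \<inter> Y. (\<forall>x\<in>fiber p X y. infdist x (fiber p X y') \<le> d) \<and>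
                 (\<forall>x\<in>fiber p X y'. infdist x (fiber p X y) \<le> d)"
proof -
  define K where "K = X \<inter> {x. d \<le> infdist x (fiber p X y)}"
  have "closed {x. d \<le> infdist x (fiber p X y)}"
    by (intro closed_Collect_le continuous_on_const continuous_on_infdist continuous_on_id)
  then have "compact K" unfolding K_def using cX by blast
  then have cK: "compact (p ` K)" using cp unfolding K_def
    by (meson compact_continuous_image continuous_on_subset inf_le1)
  have yK: "y \<notin> p ` K"
  proof
    assume "y \<in> p ` K"
    then obtain x where "x \<in> K" "p x = y" by auto
    then have "x \<in> fiber p X y" "d \<le> infdist x (fiber p X y)" unfolding K_def fiber_def by auto
    then show False using d by simp
  qed
  define V1 where "V1 = - p ` K"
  have V1: "open V1" "y \<in> V1" using cK yK compact_imp_closed unfolding V1_def by auto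
  have c1: "\<forall>x\<in>fiber p X y'. infdist x (fiber p X y) \<le> d" if "y' \<in> V1" for y'
  proof
    fix x assume "x \<in> fiber p X y'"
    then have "x \<in> X" "p x = y'" by (auto simp: fiber_def)
    then have "x \<notin> K" using that unfolding V1_def by auto
    then show "infdist x (fiber p X y) \<le> d" using \<open>x \<in> X\<close> unfolding K_def by auto
  qed
  have cf: "compact (fiber p X y)"
    proof -
    have "fiber p X y = X \<inter> fiber p X y" by (auto simp: fiber_def)
    then show ?thesis using compact_Int_closed[OF cX fiber_closed[OF cX cp, of y]] by simp
  qed
  have d2: "d/2 > 0" using d by simp
  have "fiber p X y \<subseteq> (\<Union>c\<in>fiber p X y. ball c (d/2))" using d by auto
  then obtain C where C: "C \<subseteq> fiber p X y" "finite C" "fiber p X y \<subseteq> (\<Union>c\<in>C. ball c (d/2))"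
    using compactE_image[OF cf, of "fiber p X y" "\<lambda>c. ball c (d/2)"] by blast
  have "\<forall>c\<in>C. \<exists>Ub. open Ub \<and> y \<in> Ub \<and> (\<forall>y'\<in>Ub \<inter> Y. \<exists>z\<in>X. dist c z < d/2 \<and> p z = y')"
  proof
    fix c assume "c \<in> C"
    then have "c \<in> X" "p c = y" using C(1) by (auto simp: fiber_def)
    then show "\<exists>Ub. open Ub \<and> y \<in> Ub \<and> (\<forall>y'\<in>Ub \<inter> Y. \<exists>z\<in>X. dist c z < d/2 \<and> p z = y')"
      using open_map_ball[OF om \<open>c \<in> X\<close> d2] by metis
  qed
  then obtain Of where Of: "\<forall>c\<in>C. open (Of c) \<and> y \<in> Of c \<and> (\<forall>y'\<in>Of c \<inter> Y. \<exists>z\<in>X. dist c z < d/2 \<and> p z = y')"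
    by metis
  define V where "V = V1 \<inter> (\<Inter>c\<in>C. Of c)"
  have "open V" unfolding V_def using V1 Of C(2) by (intro open_Int open_INT) auto
  moreover have "y \<in> V" unfolding V_def using V1 Of by auto
  moreover have "\<forall>y'\<in>V \<inter> Y. (\<forall>x\<in>fiber p X y. infdist x (fiber p X y') \<le> d) \<and>
                 (\<forall>x\<in>fiber p X y'. infdist x (fiber p X y) \<le> d)"
  proof (intro ballI conjI)
    fix y' x assume y': "y' \<in> V \<inter> Y" and x: "x \<in> fiber p X y"
    then obtain c where c: "c \<in> C" "dist c x < d/2" using C(3) by auto
    then have "y' \<in> Of c \<inter> Y" using y' unfolding V_def by auto
    then obtain z where z: "z \<in> X" "dist c z < d/2" "p z = y'" using Of c(1) by blast
    have "z \<in> fiber p X y'" using z by (simp add: fiber_def)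
    have "infdist x (fiber p X y') \<le> dist x z" using \<open>z \<in> fiber p X y'\<close> by (rule infdist_le)
    also have "\<dots> \<le> dist x c + dist c z" by (rule dist_triangle)
    finally show "infdist x (fiber p X y') \<le> d" using c(2) z(2) by (simp add: dist_commute)
  next
    fix y' x assume y': "y' \<in> V \<inter> Y" and x: "x \<in> fiber p X y'"
    then show "infdist x (fiber p X y) \<le> d" using c1[of y'] unfolding V_def by auto
  qed
  ultimately show ?thesis using that by blast
qed

lemma openin_sets:
  assumes "openin (top_of_set Y) U" "sets \<nu> = sets (restrict_space borel Y)"
  shows "U \<in> sets \<nu>"
proof -
  obtain V where V: "open V" "U = Y \<inter> V" using assms(1) unfolding openin_open by blast
  then show ?thesis using assms(2) by (auto simp: sets_restrict_space)
qed

lemma factor_minimal: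
  fixes p :: "'a::metric_space \<Rightarrow> 'b::metric_space"
  assumes mX: "minimal_tds T X" and fm: "factor_map T X S Y p"
    and A: "A \<subseteq> Y" "closed A" "A \<noteq> {}" "\<forall>g. S g ` A \<subseteq> A"
  shows "A = Y"
proof -
  have tX: "tds T X" and mm: "\<forall>B. B \<subseteq> X \<and> closed B \<and> B \<noteq> {} \<and> (\<forall>g. T g ` B \<subseteq> B) \<longrightarrow> B = X"
    using mX unfolding minimal_tds_def by auto
  have cX: "compact X" and TX: "\<forall>g. T g ` X \<subseteq> X" using tX unfolding tds_def by auto
  have cp: "continuous_on X p" and pY: "p ` X = Y" and eq: "\<forall>g. \<forall>x\<in>X. p (T g x) = S g (p x)"
    using fm unfolding factor_map_def by auto
  define B where "B = X \<inter> p -` A"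
  have "closed B" unfolding B_def using continuous_closed_preimage[OF cp compact_imp_closed[OF cX] A(2)] .
  moreover have "B \<noteq> {}" using A(1,3) pY unfolding B_def by blast
  moreover have "\<forall>g. T g ` B \<subseteq> B" using TX eq A(4) unfolding B_def by blast
  ultimately have "B = X" using mm unfolding B_def by blast
  then have "Y \<subseteq> A" using pY unfolding B_def by blast
  then show ?thesis using A(1) by blast
qed

lemma dense_orbit:
  fixes S :: "'g::group_add \<Rightarrow> 'b::metric_space \<Rightarrow> 'b"
  assumes tY: "tds S Y"
    and mY: "\<forall>A. A \<subseteq> Y \<and> closed A \<and> A \<noteq> {} \<and> (\<forall>g. S g ` A \<subseteq> A) \<longrightarrow> A = Y"
    and z: "z \<in> Y" and V: "open V" "Y \<inter> V \<noteq> {}"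
  shows "\<exists>g. S g z \<in> V"
proof -
  have cY: "compact Y" and cS: "\<forall>g. continuous_on Y (S g)" and SY: "\<forall>g. S g ` Y \<subseteq> Y"
    and comp: "\<forall>g h. \<forall>x\<in>Y. S (g + h) x = S g (S h x)"
    using tY unfolding tds_def by auto
  define Orb where "Orb = range (\<lambda>g. S g z)"
  have OY: "Orb \<subseteq> Y" using SY z unfolding Orb_def by blast
  have cl: "closure Orb \<subseteq> Y" using OY closure_minimal compact_imp_closed[OF cY] by blast
  have inv: "S g ` closure Orb \<subseteq> closure Orb" for g
  proof (rule image_closure_subset)
    show "continuous_on (closure Orb) (S g)" using cS cl continuous_on_subset by blast
    show "closed (closure Orb)" by simp
    have "S g ` Orb \<subseteq> Orb"
    proof
      fix w assume "w \<in> S g ` Orb"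
      then obtain h where "w = S g (S h z)" unfolding Orb_def by blast
      then have "w = S (g + h) z" using comp z by simp
      then show "w \<in> Orb" unfolding Orb_def by blast
    qed
    then show "S g ` Orb \<subseteq> closure Orb" using closure_subset by blast
  qed
  have "closure Orb \<noteq> {}" unfolding Orb_def by simp
  then have "closure Orb = Y" using mY cl inv by blast
  then have "V \<inter> closure Orb \<noteq> {}" using V(2) by blast
  then have "V \<inter> Orb \<noteq> {}" using V(1) open_Int_closure_eq_empty by blast
  then show ?thesis unfolding Orb_def by blast
qed

lemma full_support:
  fixes S :: "'g::{group_add,countable} \<Rightarrow> 'b::metric_space \<Rightarrow> 'b"
  assumes tY: "tds S Y"
    and mY: "\<forall>A. A \<subseteq> Y \<and> closed A \<and> A \<noteq> {} \<and> (\<forall>g. S g ` A \<subseteq> A) \<longrightarrow> A = Y"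
    and ip: "invariant_prob S Y \<nu>"
    and U: "openin (top_of_set Y) U" "U \<noteq> {}"
  shows "measure \<nu> U > 0"
proof (rule ccontr)
  assume "\<not> measure \<nu> U > 0"
  then have m0: "measure \<nu> U = 0" using measure_nonneg[of \<nu> U] by linarith
  have ps: "prob_space \<nu>" and sn: "sets \<nu> = sets (restrict_space borel Y)"
    and inv: "\<forall>g. \<forall>A\<in>sets \<nu>. measure \<nu> (S g -` A \<inter> Y) = measure \<nu> A"
    using ip unfolding invariant_prob_def by auto
  interpret prob_space \<nu> by (rule ps)
  have sp: "space \<nu> = Y" using sets_eq_imp_space_eq[OF sn] by (simp add: space_restrict_space)
  have cS: "\<forall>g. continuous_on Y (S g)" and SY: "\<forall>g. S g ` Y \<subseteq> Y" using tY unfolding tds_def by auto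
  obtain V where V: "open V" "U = Y \<inter> V" using U(1) unfolding openin_open by blast
  have N: "S g -` U \<inter> Y \<in> null_sets \<nu>" for g
  proof -
    obtain W where W: "open W" "W \<inter> Y = S g -` V \<inter> Y"
      using cS V(1) unfolding continuous_on_open_invariant by blast
    have "S g -` U \<inter> Y = Y \<inter> W" using W V(2) SY by blast
    then have "openin (top_of_set Y) (S g -` U \<inter> Y)" using W(1) by (auto simp: openin_open)
    then have s: "S g -` U \<inter> Y \<in> sets \<nu>" using sn by (rule openin_sets)
    have "measure \<nu> (S g -` U \<inter> Y) = 0" using inv openin_sets[OF U(1) sn] m0 by simp
    then show ?thesis using s by (simp add: emeasure_eq_measure null_sets_def)
  qed
  have "(\<Union>g\<in>UNIV. S g -` U \<inter> Y) \<in> null_sets \<nu>" by (rule null_sets_UN') (auto intro: N)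
  moreover have "Y \<subseteq> (\<Union>g\<in>UNIV. S g -` U \<inter> Y)"
  proof
    fix z assume "z \<in> Y"
    then obtain g where "S g z \<in> V" using dense_orbit[OF tY mY _ V(1)] U(2) V(2) by blast
    then show "z \<in> (\<Union>g\<in>UNIV. S g -` U \<inter> Y)" using \<open>z \<in> Y\<close> V(2) cS tY unfolding tds_def by blast
  qed
  ultimately have "Y \<in> null_sets \<nu>" using sp null_sets_subset by (metis sets.top)
  then show False using sp emeasure_space_1 by (simp add: null_sets_def)
qed

lemma hull_card:
  fixes p :: "'a::metric_space \<Rightarrow> 'b::metric_space"
  assumes cX: "compact X" and cp: "continuous_on X p" and pY: "p ` X = Y"
    and E: "E \<in> fiber_hull p X Y" and nE: "\<not> (finite E \<and> card E \<le> K)"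
  obtains \<epsilon> where "\<epsilon> > 0" "\<forall>F\<in>fiber_hull p X Y. hausdist E F < \<epsilon> \<longrightarrow>
      \<not> (finite (fiber p X (piX p F)) \<and> card (fiber p X (piX p F)) = K)"
proof -
  have EX: "E \<subseteq> X" "E \<noteq> {}" using E by (auto simp: fiber_hull_def)
  have bE: "bounded E" by (rule bounded_subset[OF compact_imp_bounded[OF cX] EX(1)])
  obtain D where D: "D \<subseteq> E" "finite D" "card D = Suc K"
  proof (cases "finite E")
    case True
    then have "Suc K \<le> card E" using nE by simp
    then show ?thesis using obtain_subset_with_card_n that by metis
  next
    case False
    then show ?thesis using infinite_arbitrarily_large that by metis
  qed
  define P where "P = {(a,b) \<in> D \<times> D. a \<noteq> b}"
  define \<epsilon> where "\<epsilon> = Min (insert 1 ((\<lambda>(a,b). dist a b / 2) ` P))"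
  have fP: "finite P" using D(2) unfolding P_def by (auto intro: finite_subset[of _ "D \<times> D"])
  have ep: "\<epsilon> > 0" unfolding \<epsilon>_def using fP by (auto simp: Min_gr_iff P_def)
  have epl: "\<epsilon> \<le> dist a b / 2" if "a \<in> D" "b \<in> D" "a \<noteq> b" for a b
  proof -
    have "(a,b) \<in> P" using that unfolding P_def by auto
    then show ?thesis unfolding \<epsilon>_def using fP by (intro Min_le_iff[THEN iffD2]) force+
  qed
  have "\<forall>F\<in>fiber_hull p X Y. hausdist E F < \<epsilon> \<longrightarrow>
      \<not> (finite (fiber p X (piX p F)) \<and> card (fiber p X (piX p F)) = K)"
  proof (intro ballI impI)
    fix F assume F: "F \<in> fiber_hull p X Y" and h: "hausdist E F < \<epsilon>"
    have FX: "F \<subseteq> X" "F \<noteq> {}" using F by (auto simp: fiber_hull_def)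
    have bF: "bounded F" by (rule bounded_subset[OF compact_imp_bounded[OF cX] FX(1)])
    have hd: "\<forall>a\<in>E. infdist a F < \<epsilon>" using hausdist_lessD(1)[OF bE bF EX(2) FX(2) h] .
    have "\<forall>a\<in>D. \<exists>z\<in>F. dist a z < \<epsilon>" using hd D(1) FX(2) infdist_lessE by (metis subsetD)
    then obtain z where z: "\<forall>a\<in>D. z a \<in> F \<and> dist a (z a) < \<epsilon>" by metis
    have inj: "inj_on z D"
    proof (rule inj_onI, rule ccontr)
      fix a b assume ab: "a \<in> D" "b \<in> D" "z a = z b" "a \<noteq> b"
      have "dist a b \<le> dist a (z a) + dist b (z b)" using dist_triangle[of a b "z a"] ab(3) by (metis dist_commute)
      also have "\<dots> < 2 * \<epsilon>"
      proof -
        have "dist a (z a) < \<epsilon>" "dist b (z b) < \<epsilon>" using z ab(1,2) by blast+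
        then show ?thesis by linarith
      qed
      finally show False using epl[OF ab(1,2,4)] by linarith
    qed
    have f0: "F \<noteq> {}" using FX by simp
    then obtain f0 where "f0 \<in> F" by blast
    have sub: "z ` D \<subseteq> fiber p X (piX p F)" using z hull_piX(3)[OF cX cp pY F \<open>f0 \<in> F\<close>] by blast
    show "\<not> (finite (fiber p X (piX p F)) \<and> card (fiber p X (piX p F)) = K)"
    proof
      assume a: "finite (fiber p X (piX p F)) \<and> card (fiber p X (piX p F)) = K"
      have "card (z ` D) \<le> card (fiber p X (piX p F))" using card_mono a sub by blast
      moreover have "card (z ` D) = Suc K" using card_image[OF inj] D(3) by simp
      ultimately show False using a by simp
    qed
  qed
  then show ?thesis using that ep by blast
qed

lemma fiber_ball_open:
  fixes p :: "'a::metric_space \<Rightarrow> 'b::metric_space"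
  assumes cX: "compact X" and cp: "continuous_on X p" and pY: "p ` X = Y"
    and om: "open_map (top_of_set X) (top_of_set Y) p" and y: "y \<in> Y"
  shows "openin (top_of_set Y) {y'\<in>Y. hausdist (fiber p X y) (fiber p X y') < e}"
proof (subst openin_subopen, intro ballI)
  let ?E = "fiber p X y"
  fix y1 assume y1: "y1 \<in> {y'\<in>Y. hausdist ?E (fiber p X y') < e}"
  define r where "r = hausdist ?E (fiber p X y1)"
  have r: "r < e" "y1 \<in> Y" using y1 r_def by auto
  define d where "d = (e - r) / 2"
  have d: "d > 0" using r unfolding d_def by simp
  have nE: "?E \<noteq> {}" using fiber_ne[OF pY y] .
  have n1: "fiber p X y1 \<noteq> {}" using fiber_ne[OF pY r(2)] .
  note h1 = hausdist_leD[OF fiber_bounded[OF cX] fiber_bounded[OF cX] nE n1, of r, unfolded r_def, simplified]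
  obtain V where V: "open V" "y1 \<in> V"
    "\<forall>y'\<in>V \<inter> Y. (\<forall>x\<in>fiber p X y1. infdist x (fiber p X y') \<le> d) \<and>
                 (\<forall>x\<in>fiber p X y'. infdist x (fiber p X y1) \<le> d)"
    using fiber_cont[OF cX cp pY om r(2) d] by blast
  have "Y \<inter> V \<subseteq> {y'\<in>Y. hausdist ?E (fiber p X y') < e}"
  proof
    fix y' assume y': "y' \<in> Y \<inter> V"
    have n': "fiber p X y' \<noteq> {}" using fiber_ne[OF pY] y' by blast
    have "hausdist ?E (fiber p X y') \<le> r + d"
    proof (rule hausdist_leI[OF nE n'])
      show "\<forall>x\<in>?E. infdist x (fiber p X y') \<le> r + d"
      proof
        fix x assume x: "x \<in> ?E"
        have "infdist x (fiber p X y') \<le> infdist x (fiber p X y1) + d"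
          using infdist_trans[OF n1] V(3) y' by blast
        then show "infdist x (fiber p X y') \<le> r + d" using h1(1) x r_def by force
      qed
      show "\<forall>x\<in>fiber p X y'. infdist x ?E \<le> r + d"
      proof
        fix x assume x: "x \<in> fiber p X y'"
        have "infdist x ?E \<le> infdist x (fiber p X y1) + r"
          using infdist_trans[OF n1] h1(2) r_def by blast
        moreover have "infdist x (fiber p X y1) \<le> d" using V(3) y' x by blast
        ultimately show "infdist x ?E \<le> r + d" by linarith
      qed
    qed
    moreover have "r + d < e" using r(1) unfolding d_def by (simp add: field_simps)
    ultimately have "hausdist ?E (fiber p X y') < e" by linarith
    then show "y' \<in> {y'\<in>Y. hausdist ?E (fiber p X y') < e}" using y' by blast
  qed
  moreover have "openin (top_of_set Y) (Y \<inter> V)" using V(1) by (auto simp: openin_open)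
  ultimately show "\<exists>T. openin (top_of_set Y) T \<and> y1 \<in> T \<and> T \<subseteq> {y'\<in>Y. hausdist ?E (fiber p X y') < e}"
    using V(2) r(2) by blast
qed

theorem lemma3p3:
  fixes T :: "'g::{group_add,countable} \<Rightarrow> 'a::metric_space \<Rightarrow> 'a"
    and X :: "'a set"
    and S :: "'g \<Rightarrow> 'b::metric_space \<Rightarrow> 'b"
    and Y :: "'b set"
    and p :: "'a \<Rightarrow> 'b"
    and \<nu> :: "'b measure"
  assumes "infinite (UNIV :: 'g set)"
    and "minimal_tds T X"
    and "max_equicontinuous_factor T X S Y p"
    and "invariant_prob S Y \<nu>"
    and "\<forall>\<mu>. invariant_prob S Y \<mu> \<longrightarrow> \<mu> = \<nu>"
  shows "(open_map (top_of_set X) (top_of_set Y) p \<longrightarrow>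
            meas_part p X Y \<nu> = {fiber p X y | y. y \<in> Y})
       \<and> ((AE y in \<nu>. finite (fiber p X y) \<and> card (fiber p X y) = 1) \<longrightarrow>
            (\<forall>E\<in>meas_part p X Y \<nu>. card E = 1))
       \<and> (\<forall>K::nat. (AE y in \<nu>. finite (fiber p X y) \<and> card (fiber p X y) = K) \<longrightarrow>
            (\<forall>E\<in>meas_part p X Y \<nu>. finite E \<and> card E \<le> K))"
proof -
  have tX: "tds T X" using assms(2) unfolding minimal_tds_def by blast
  have cX: "compact X" using tX unfolding tds_def by blast
  have tY: "tds S Y" and fm: "factor_map T X S Y p"
    using assms(3) unfolding max_equicontinuous_factor_def by blast+
  have cp: "continuous_on X p" and pY: "p ` X = Y" using fm unfolding factor_map_def by blast+
  have mY: "\<forall>A. A \<subseteq> Y \<and> closed A \<and> A \<noteq> {} \<and> (\<forall>g. S g ` A \<subseteq> A) \<longrightarrow> A = Y"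
    using factor_minimal[OF assms(2) fm] by blast
  have ps: "prob_space \<nu>" and sn: "sets \<nu> = sets (restrict_space borel Y)"
    using assms(4) unfolding invariant_prob_def by auto
  have sp: "space \<nu> = Y" using sets_eq_imp_space_eq[OF sn] by (simp add: space_restrict_space)
  have P3: "\<forall>K::nat. (AE y in \<nu>. finite (fiber p X y) \<and> card (fiber p X y) = K) \<longrightarrow>
            (\<forall>E\<in>meas_part p X Y \<nu>. finite E \<and> card E \<le> K)"
  proof (intro allI impI ballI)
    fix K :: nat and E
    assume ae: "AE y in \<nu>. finite (fiber p X y) \<and> card (fiber p X y) = K"
      and E: "E \<in> meas_part p X Y \<nu>"
    have Eh: "E \<in> fiber_hull p X Y" using E unfolding meas_part_def by blast
    show "finite E \<and> card E \<le> K"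
    proof (rule ccontr)
      assume nE: "\<not> (finite E \<and> card E \<le> K)"
      obtain \<epsilon> where ep: "\<epsilon> > 0" "\<forall>F\<in>fiber_hull p X Y. hausdist E F < \<epsilon> \<longrightarrow>
        \<not> (finite (fiber p X (piX p F)) \<and> card (fiber p X (piX p F)) = K)"
        using hull_card[OF cX cp pY Eh nE] by blast
      define A where "A = piX p ` {F\<in>fiber_hull p X Y. hausdist E F < \<epsilon>}"
      have mA: "measure \<nu> A > 0" using E ep(1) unfolding meas_part_def A_def by blast
      then have As: "A \<in> sets \<nu>" using measure_notin_sets by force
      obtain N where N: "{y \<in> space \<nu>. \<not> (finite (fiber p X y) \<and> card (fiber p X y) = K)} \<subseteq> N"
        "emeasure \<nu> N = 0" "N \<in> sets \<nu>"
        using ae by (rule AE_E)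
      have "A \<subseteq> {y \<in> space \<nu>. \<not> (finite (fiber p X y) \<and> card (fiber p X y) = K)}"
      proof
        fix y assume "y \<in> A"
        then obtain F where F: "F \<in> fiber_hull p X Y" "hausdist E F < \<epsilon>" "y = piX p F"
          unfolding A_def by blast
        obtain f0 where "f0 \<in> F" using F(1) unfolding fiber_hull_def by blast
        then have "y \<in> Y" using hull_piX(2)[OF cX cp pY F(1)] F(3) by blast
        then show "y \<in> {y \<in> space \<nu>. \<not> (finite (fiber p X y) \<and> card (fiber p X y) = K)}"
          using ep(2) F sp by blast
      qed
      then have "emeasure \<nu> A \<le> emeasure \<nu> N" using N(1,3) by (intro emeasure_mono) auto
      then have "emeasure \<nu> A = 0" using N(2) by simp
      then have "measure \<nu> A = 0" by (simp add: measure_def)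
      then show False using mA by simp
    qed
  qed
  have P2: "(AE y in \<nu>. finite (fiber p X y) \<and> card (fiber p X y) = 1) \<longrightarrow>
            (\<forall>E\<in>meas_part p X Y \<nu>. card E = 1)"
  proof (intro impI ballI)
    fix E assume ae: "AE y in \<nu>. finite (fiber p X y) \<and> card (fiber p X y) = 1"
      and E: "E \<in> meas_part p X Y \<nu>"
    have "E \<noteq> {}" using E unfolding meas_part_def fiber_hull_def by blast
    moreover have "finite E \<and> card E \<le> 1" using P3 ae E by blast
    ultimately show "card E = 1" by (metis card_0_eq le_antisym not_less_eq_eq One_nat_def less_one not_le)
  qed
  have P1: "open_map (top_of_set X) (top_of_set Y) p \<longrightarrow>
            meas_part p X Y \<nu> = {fiber p X y | y. y \<in> Y}"
  proof
    assume om: "open_map (top_of_set X) (top_of_set Y) p"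
    show "meas_part p X Y \<nu> = {fiber p X y | y. y \<in> Y}"
    proof
      show "meas_part p X Y \<nu> \<subseteq> {fiber p X y | y. y \<in> Y}"
      proof
        fix E assume E: "E \<in> meas_part p X Y \<nu>"
        then have Eh: "E \<in> fiber_hull p X Y" unfolding meas_part_def by blast
        obtain f0 where "f0 \<in> E" using Eh unfolding fiber_hull_def by blast
        then have "piX p E \<in> Y" using hull_piX(2)[OF cX cp pY Eh] by blast
        then show "E \<in> {fiber p X y | y. y \<in> Y}" using hull_open_fiber[OF cX cp pY om Eh] by blast
      qed
      show "{fiber p X y | y. y \<in> Y} \<subseteq> meas_part p X Y \<nu>"
      proof
        fix E assume "E \<in> {fiber p X y | y. y \<in> Y}"
        then obtain y where y: "y \<in> Y" "E = fiber p X y" by blast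
        have Eh: "E \<in> fiber_hull p X Y" using fiber_in_hull[OF cX cp pY y(1)] y(2) by simp
        have "measure \<nu> (piX p ` {F\<in>fiber_hull p X Y. hausdist E F < e}) > 0" if e: "e > 0" for e
        proof -
          have eq: "piX p ` {F\<in>fiber_hull p X Y. hausdist E F < e} = {y'\<in>Y. hausdist E (fiber p X y') < e}"
          proof
            show "piX p ` {F\<in>fiber_hull p X Y. hausdist E F < e} \<subseteq> {y'\<in>Y. hausdist E (fiber p X y') < e}"
            proof
              fix y' assume "y' \<in> piX p ` {F\<in>fiber_hull p X Y. hausdist E F < e}"
              then obtain F where F: "F \<in> fiber_hull p X Y" "hausdist E F < e" "y' = piX p F" by blast
              obtain f0 where "f0 \<in> F" using F(1) unfolding fiber_hull_def by blast
              then have "y' \<in> Y" using hull_piX(2)[OF cX cp pY F(1)] F(3) by blast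
              then show "y' \<in> {y'\<in>Y. hausdist E (fiber p X y') < e}"
                using hull_open_fiber[OF cX cp pY om F(1)] F by auto
            qed
            show "{y'\<in>Y. hausdist E (fiber p X y') < e} \<subseteq> piX p ` {F\<in>fiber_hull p X Y. hausdist E F < e}"
            proof
              fix y' assume y': "y' \<in> {y'\<in>Y. hausdist E (fiber p X y') < e}"
              then have "fiber p X y' \<in> {F\<in>fiber_hull p X Y. hausdist E F < e}"
                using fiber_in_hull[OF cX cp pY] by blast
              moreover have "piX p (fiber p X y') = y'" using piX_fiber[OF pY] y' by blast
              ultimately show "y' \<in> piX p ` {F\<in>fiber_hull p X Y. hausdist E F < e}"
                by (metis image_eqI)
            qed
          qed
          have "y \<in> {y'\<in>Y. hausdist E (fiber p X y') < e}"
            using y hausdist_self[OF fiber_ne[OF pY y(1)]] e by simp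
          then show ?thesis unfolding eq
            using full_support[OF tY mY assms(4) fiber_ball_open[OF cX cp pY om y(1)]] y(2) by blast
        qed
        then show "E \<in> meas_part p X Y \<nu>" using Eh unfolding meas_part_def by blast
      qed
    qed
  qed
  show ?thesis using P1 P2 P3 by blast
qed

end
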